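(* Let $K$ be a field of characteristic $0$ with henselian valuation ring $A$, valuation $v$ and residue field of characteristic $p>0$, containing a primitive $p$-th root of unity $\zeta$; put $\mathfrak{z}=\zeta-1$. Let $L|K$ be a non-trivial defectless Kummer extension of degree $p$ and $h$ a best element. Then the ideal $\mathbb{I}'$ of $A$ generated by $\{p\frac{a-1}{h-1}: a\in A,\ a^ph \text{ is best}\}$ is contained in $\mathbb{I}=\{x\in K: v(x)\ge\frac{p-1}{p}v(\frac{\mathfrak{z}^p}{h-1})\}$.
   Context: $\mathfrak{A}$ is the set of $g\in K$ such that the solutions of $X^p=g$ generate $L$; $g\in\mathfrak{A}$ is best if $v(\mathfrak{z}^p/(g-1))=\inf_{g'\in\mathfrak{A}}v(\mathfrak{z}^p/(g'-1))$. Defectless means $p=ef$ with $e$ the ramification index and $f$ the residue degree of $L|K$. *)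

theory Defs
  imports "HOL-Computational_Algebra.Polynomial"
begin

text \<open>Setting: the extension field L is the whole type 'l (char 0); the base field K is a
  subfield of it, given as a set. The valuation v is a Krull valuation on L (the unique
  extension of the henselian valuation of K), with values in an ordered abelian group;
  v 0 is irrelevant (formally v 0 plays the role of infinity and is always treated
  separately).\<close>

definition subfield :: "'a::field set \<Rightarrow> bool" where
  "subfield F \<longleftrightarrow> 0 \<in> F \<and> 1 \<in> F \<and>
     (\<forall>x\<in>F. \<forall>y\<in>F. x + y \<in> F \<and> x * y \<in> F) \<and>
     (\<forall>x\<in>F. - x \<in> F \<and> inverse x \<in> F)"

definition gen_field :: "'a::field set \<Rightarrow> 'a set \<Rightarrow> 'a set" where
  "gen_field F S = \<Inter> {E. subfield E \<and> F \<subseteq> E \<and> S \<subseteq> E}"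

definition valuation :: "('a::field \<Rightarrow> 'g::linordered_ab_group_add) \<Rightarrow> bool" where
  "valuation v \<longleftrightarrow>
     (\<forall>x y. x \<noteq> 0 \<longrightarrow> y \<noteq> 0 \<longrightarrow> v (x * y) = v x + v y) \<and>
     (\<forall>x y. x \<noteq> 0 \<longrightarrow> y \<noteq> 0 \<longrightarrow> x + y \<noteq> 0 \<longrightarrow> min (v x) (v y) \<le> v (x + y))"

definition val_int :: "('a::field \<Rightarrow> 'g::linordered_ab_group_add) \<Rightarrow> 'a \<Rightarrow> bool" where
  "val_int v x \<longleftrightarrow> x = 0 \<or> 0 \<le> v x"

definition val_pos :: "('a::field \<Rightarrow> 'g::linordered_ab_group_add) \<Rightarrow> 'a \<Rightarrow> bool" where
  "val_pos v x \<longleftrightarrow> x = 0 \<or> 0 < v x"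

definition val_ring :: "'a::field set \<Rightarrow> ('a \<Rightarrow> 'g::linordered_ab_group_add) \<Rightarrow> 'a set" where
  "val_ring K v = {x \<in> K. val_int v x}"

definition henselian :: "'a::field set \<Rightarrow> ('a \<Rightarrow> 'g::linordered_ab_group_add) \<Rightarrow> bool" where
  "henselian K v \<longleftrightarrow>
     (\<forall>f a. (\<forall>i. coeff f i \<in> val_ring K v) \<longrightarrow> lead_coeff f = 1 \<longrightarrow>
        a \<in> val_ring K v \<longrightarrow> val_pos v (poly f a) \<longrightarrow> \<not> val_pos v (poly (pderiv f) a) \<longrightarrow>
        (\<exists>b \<in> val_ring K v. poly f b = 0 \<and> val_pos v (b - a)))"

definition primitive_root :: "nat \<Rightarrow> 'a::field \<Rightarrow> bool" where
  "primitive_root p z \<longleftrightarrow> z ^ p = 1 \<and> (\<forall>k. 0 < k \<and> k < p \<longrightarrow> z ^ k \<noteq> 1)"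

definition indep_over :: "'a::field set \<Rightarrow> 'a list \<Rightarrow> bool" where
  "indep_over K xs \<longleftrightarrow>
     (\<forall>c. (\<forall>i<length xs. c i \<in> K) \<longrightarrow> (\<Sum>i<length xs. c i * xs ! i) = 0 \<longrightarrow>
          (\<forall>i<length xs. c i = 0))"

definition ext_degree_is :: "'a::field set \<Rightarrow> nat \<Rightarrow> bool" where
  "ext_degree_is K n \<longleftrightarrow>
     (\<exists>xs. length xs = n \<and> indep_over K xs) \<and> (\<forall>xs. indep_over K xs \<longrightarrow> length xs \<le> n)"

definition value_group :: "'a::field set \<Rightarrow> ('a \<Rightarrow> 'g::linordered_ab_group_add) \<Rightarrow> 'g set" where
  "value_group F v = v ` (F - {0})"

definition ram_index_is :: "'a::field set \<Rightarrow> ('a \<Rightarrow> 'g::linordered_ab_group_add) \<Rightarrow> nat \<Rightarrow> bool" where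
  "ram_index_is K v e \<longleftrightarrow>
     (let cosets = (\<lambda>\<gamma>. (\<lambda>\<delta>. \<gamma> + \<delta>) ` value_group K v) ` value_group UNIV v
      in finite cosets \<and> card cosets = e)"

text \<open>Residues of elements xs of the valuation ring of L are linearly independent over the
  residue field Kv (residues of elements c of the valuation ring of K).\<close>
definition res_indep :: "'a::field set \<Rightarrow> ('a \<Rightarrow> 'g::linordered_ab_group_add) \<Rightarrow> 'a list \<Rightarrow> bool" where
  "res_indep K v xs \<longleftrightarrow> (\<forall>i<length xs. val_int v (xs ! i)) \<and>
     (\<forall>c. (\<forall>i<length xs. c i \<in> val_ring K v) \<longrightarrow> val_pos v (\<Sum>i<length xs. c i * xs ! i) \<longrightarrow>
          (\<forall>i<length xs. val_pos v (c i)))"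

definition res_degree_is :: "'a::field set \<Rightarrow> ('a \<Rightarrow> 'g::linordered_ab_group_add) \<Rightarrow> nat \<Rightarrow> bool" where
  "res_degree_is K v f \<longleftrightarrow>
     (\<exists>xs. length xs = f \<and> res_indep K v xs) \<and> (\<forall>xs. res_indep K v xs \<longrightarrow> length xs \<le> f)"

definition defectless :: "'a::field set \<Rightarrow> ('a \<Rightarrow> 'g::linordered_ab_group_add) \<Rightarrow> nat \<Rightarrow> bool" where
  "defectless K v n \<longleftrightarrow> (\<exists>e f. ram_index_is K v e \<and> res_degree_is K v f \<and> n = e * f)"

definition frakA :: "'a::field set \<Rightarrow> nat \<Rightarrow> 'a set" where
  "frakA K p = {g \<in> K. gen_field K {x. x ^ p = g} = UNIV}"

definition best :: "'a::field set \<Rightarrow> ('a \<Rightarrow> 'g::linordered_ab_group_add) \<Rightarrow> nat \<Rightarrow> 'a \<Rightarrow> 'a \<Rightarrow> bool" where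
  "best K v p z g \<longleftrightarrow> g \<in> frakA K p \<and>
     (\<forall>g' \<in> frakA K p. v (z ^ p / (g - 1)) \<le> v (z ^ p / (g' - 1)))"

definition ideal_gen :: "'a::field set \<Rightarrow> 'a set \<Rightarrow> 'a set" where
  "ideal_gen A S = {\<Sum>i<n. c i * s i | (n::nat) c s. \<forall>i<n. c i \<in> A \<and> s i \<in> S}"

primrec nsm :: "nat \<Rightarrow> 'g::linordered_ab_group_add \<Rightarrow> 'g" where
  "nsm 0 g = 0"
| "nsm (Suc n) g = g + nsm n g"

end

theory Submission imports Defs "HOL-Computational_Algebra.Polynomial" "HOL-Computational_Algebra.Primes" begin

lemma nsm_zero[simp]: "nsm n (0::'g::linordered_ab_group_add) = 0"
  by (induction n) simp_all
lemma nsm_add: "nsm n (x + y) = nsm n x + nsm n (y::'g::linordered_ab_group_add)"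
  by (induction n) (simp_all add: algebra_simps)
lemma nsm_minus: "nsm n (- x) = - nsm n (x::'g::linordered_ab_group_add)"
  by (induction n) (simp_all add: algebra_simps)
lemma nsm_diff: "nsm n (x - y) = nsm n x - nsm n (y::'g::linordered_ab_group_add)"
  using nsm_add[of n x "-y"] nsm_minus[of n y] by simp
lemma nsm_plus_nat: "nsm (m + n) x = nsm m x + nsm n (x::'g::linordered_ab_group_add)"
  by (induction m) (simp_all add: algebra_simps)
lemma nsm_mult_nat: "nsm (m * n) x = nsm m (nsm n (x::'g::linordered_ab_group_add))"
  by (induction m) (simp_all add: nsm_plus_nat)
lemma nsm_mono: "x \<le> y \<Longrightarrow> nsm n x \<le> nsm n (y::'g::linordered_ab_group_add)"
  by (induction n) (simp_all add: add_mono)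
lemma nsm_strict: "x < y \<Longrightarrow> 0 < n \<Longrightarrow> nsm n x < nsm n (y::'g::linordered_ab_group_add)"
proof (induction n)
  case (Suc n) thus ?case by (cases n) (auto intro: add_less_le_mono nsm_mono)
qed simp
lemma nsm_nonneg: "0 \<le> x \<Longrightarrow> 0 \<le> nsm n (x::'g::linordered_ab_group_add)"
  using nsm_mono[of 0 x n] by (induction n) simp_all
lemma nsm_pos: "0 < x \<Longrightarrow> 0 < n \<Longrightarrow> 0 < nsm n (x::'g::linordered_ab_group_add)"
  using nsm_strict[of 0 x n] by simp
lemma nsm_ge_self: "0 \<le> x \<Longrightarrow> 1 \<le> n \<Longrightarrow> x \<le> nsm n (x::'g::linordered_ab_group_add)"
  by (cases n) (auto intro: nsm_nonneg)
lemma nsm_mono_nat: "0 \<le> x \<Longrightarrow> m \<le> n \<Longrightarrow> nsm m x \<le> nsm n (x::'g::linordered_ab_group_add)"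
  using nsm_plus_nat[of m "n-m" x] nsm_nonneg[of x "n-m"] by simp
lemma nsm_eq0: "nsm n x = 0 \<Longrightarrow> 0 < n \<Longrightarrow> x = (0::'g::linordered_ab_group_add)"
proof (rule ccontr)
  assume "nsm n x = 0" "0 < n" "x \<noteq> 0"
  hence "x < 0 \<or> 0 < x" by auto
  thus False using nsm_strict[of x 0 n] nsm_strict[of 0 x n] \<open>nsm n x = 0\<close> \<open>0 < n\<close> by auto
qed

locale vfield =
  fixes v :: "'l::field_char_0 \<Rightarrow> 'g::linordered_ab_group_add"
  assumes val: "valuation v"
begin

lemma vmult: "x \<noteq> 0 \<Longrightarrow> y \<noteq> 0 \<Longrightarrow> v (x * y) = v x + v y"
  using val unfolding valuation_def by blast
lemma vadd: "x \<noteq> 0 \<Longrightarrow> y \<noteq> 0 \<Longrightarrow> x + y \<noteq> 0 \<Longrightarrow> min (v x) (v y) \<le> v (x + y)"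
  using val unfolding valuation_def by blast
lemma v1: "v 1 = 0"
  using vmult[of 1 1] by simp
lemma vm1: "v (-1) = 0"
proof -
  have "v (-1) + v (-1) = 0" using vmult[of "-1" "-1"] v1 by simp
  show ?thesis
  proof (rule ccontr)
    assume "v (-1) \<noteq> 0"
    hence "v (-1) < 0 \<or> 0 < v (-1)" by auto
    hence "v (-1) + v (-1) < 0 \<or> 0 < v (-1) + v (-1)" using add_neg_neg add_pos_pos by blast
    thus False using \<open>v (-1) + v (-1) = 0\<close> by simp
  qed
qed
lemma vneg: "v (- x) = v x"
  by (cases "x = 0") (use vmult[of "-1" x] vm1 in auto)
lemma vinv: "x \<noteq> 0 \<Longrightarrow> v (inverse x) = - v x"
  using vmult[of x "inverse x"] v1 by (simp add: eq_neg_iff_add_eq_0 add.commute)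
lemma vdiv: "x \<noteq> 0 \<Longrightarrow> y \<noteq> 0 \<Longrightarrow> v (x / y) = v x - v y"
  by (simp add: divide_inverse vmult vinv)
lemma vpow: "x \<noteq> 0 \<Longrightarrow> v (x ^ n) = nsm n (v x)"
  by (induction n) (simp_all add: v1 vmult)

definition ge :: "'g \<Rightarrow> 'l \<Rightarrow> bool" where "ge g x \<longleftrightarrow> x = 0 \<or> g \<le> v x"

lemma ge_add: "ge g x \<Longrightarrow> ge g y \<Longrightarrow> ge g (x + y)"
proof -
  assume a: "ge g x" "ge g y"
  show ?thesis
  proof (cases "x = 0 \<or> y = 0 \<or> x + y = 0")
    case True thus ?thesis using a by (auto simp: ge_def)
  next
    case False
    hence "min (v x) (v y) \<le> v (x+y)" using vadd by blast
    thus ?thesis using a False by (auto simp: ge_def min_def split: if_splits)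
  qed
qed
lemma ge_mult: "ge g x \<Longrightarrow> ge g' y \<Longrightarrow> ge (g + g') (x * y)"
  unfolding ge_def using vmult[of x y] by (cases "y = 0"; cases "x = 0") (auto intro: add_mono)
lemma ge_mono: "ge g x \<Longrightarrow> g' \<le> g \<Longrightarrow> ge g' x"
  unfolding ge_def by auto
lemma ge_neg: "ge g x \<Longrightarrow> ge g (-x)"
  unfolding ge_def by (auto simp: vneg)
lemma ge_sum: "finite S \<Longrightarrow> (\<And>i. i \<in> S \<Longrightarrow> ge g (f i)) \<Longrightarrow> ge g (\<Sum>i\<in>S. f i)"
proof (induction S rule: finite_induct)
  case (insert a F) thus ?case using ge_add[of g "f a" "sum f F"] by simp
qed (simp add: ge_def)
lemma ge_of_nat: "ge 0 (of_nat n)"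
proof (induction n)
  case (Suc n) thus ?case using ge_add[of 0 1 "of_nat n"] by (simp add: ge_def v1 add.commute)
qed (simp add: ge_def)
lemma ge_pow: "ge g x \<Longrightarrow> ge (nsm n g) (x ^ n)"
proof (induction n)
  case 0 thus ?case by (simp add: ge_def v1)
next
  case (Suc n) thus ?case using ge_mult[of g x "nsm n g" "x^n"] by simp
qed

lemma v_strict: "x \<noteq> 0 \<Longrightarrow> ge g y \<Longrightarrow> v x < g \<Longrightarrow> v (x + y) = v x"
proof (cases "y = 0")
  case False
  assume x: "x \<noteq> 0" and "ge g y" and lt: "v x < g"
  hence vy: "v x < v y" using False by (auto simp: ge_def)
  have xy: "x + y \<noteq> 0"
  proof
    assume "x + y = 0" hence "y = - x" by (simp add: eq_neg_iff_add_eq_0 add.commute)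
    thus False using vy vneg by simp
  qed
  have "min (v x) (v y) \<le> v (x+y)" using vadd[OF x False xy] .
  hence a: "v x \<le> v (x+y)" using vy by simp
  have "min (v (x+y)) (v (-y)) \<le> v ((x+y) + (-y))"
    using vadd[OF xy, of "-y"] False x by simp
  hence "min (v (x+y)) (v y) \<le> v x" by (simp add: vneg)
  hence "v (x+y) \<le> v x" using vy by (auto simp: min_def split: if_splits)
  thus ?thesis using a by simp
qed simp

end

lemma sf_add: "subfield K \<Longrightarrow> x \<in> K \<Longrightarrow> y \<in> K \<Longrightarrow> x + y \<in> K"
  and sf_mult: "subfield K \<Longrightarrow> x \<in> K \<Longrightarrow> y \<in> K \<Longrightarrow> x * y \<in> K"
  and sf_neg: "subfield K \<Longrightarrow> x \<in> K \<Longrightarrow> - x \<in> K"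
  and sf_inv: "subfield K \<Longrightarrow> x \<in> K \<Longrightarrow> inverse x \<in> K"
  and sf_0: "subfield K \<Longrightarrow> 0 \<in> K"
  and sf_1: "subfield K \<Longrightarrow> 1 \<in> K"
  unfolding subfield_def by auto
lemma sf_diff: "subfield K \<Longrightarrow> x \<in> K \<Longrightarrow> y \<in> K \<Longrightarrow> x - y \<in> K"
  using sf_add[of K x "-y"] sf_neg[of K y] by simp
lemma sf_div: "subfield K \<Longrightarrow> x \<in> K \<Longrightarrow> y \<in> K \<Longrightarrow> x / y \<in> K"
  using sf_mult[of K x "inverse y"] sf_inv[of K y] by (simp add: divide_inverse)
lemma sf_pow: "subfield K \<Longrightarrow> x \<in> K \<Longrightarrow> x ^ n \<in> K"
  by (induction n) (auto intro: sf_1 sf_mult)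
lemma sf_nat: "subfield K \<Longrightarrow> of_nat n \<in> K"
  by (induction n) (auto intro: sf_0 sf_1 sf_add)

lemma ext_deg_not_univ:
  assumes "ext_degree_is K p" "2 \<le> p" shows "K \<noteq> (UNIV :: 'a::field set)"
proof
  assume KU: "K = UNIV"
  obtain xs :: "'a list" where l: "length xs = p" and ind: "indep_over K xs"
    using assms(1) unfolding ext_degree_is_def by blast
  have l2: "0 < length xs" "1 < length xs" using l assms(2) by auto
  have sumsplit: "\<And>c. c 0 = 0 \<or> c 0 \<noteq> 0 \<Longrightarrow> (\<forall>i. i \<noteq> 0 \<and> i \<noteq> 1 \<longrightarrow> c i = 0) \<Longrightarrow>
     (\<Sum>i<length xs. c i * xs ! i) = c 0 * xs ! 0 + c 1 * xs ! 1"
  proof -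
    fix c :: "nat \<Rightarrow> 'a" assume "\<forall>i. i \<noteq> 0 \<and> i \<noteq> 1 \<longrightarrow> c i = 0"
    hence "(\<Sum>i<length xs. c i * xs ! i) = (\<Sum>i\<in>{0,1}. c i * xs ! i)"
      using l2 by (intro sum.mono_neutral_right) auto
    thus "(\<Sum>i<length xs. c i * xs ! i) = c 0 * xs ! 0 + c 1 * xs ! 1" by simp
  qed
  define c where "c = (\<lambda>i::nat. if i = 0 then xs ! 1 else if i = 1 then - (xs ! 0) else 0)"
  have "(\<Sum>i<length xs. c i * xs ! i) = 0"
    by (subst sumsplit) (auto simp: c_def)
  hence "\<forall>i<length xs. c i = 0" using ind KU unfolding indep_over_def by blast
  hence x0: "xs ! 0 = 0" using l2 by (auto simp: c_def)
  define d where "d = (\<lambda>i::nat. if i = 0 then 1 else (0::'a))"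
  have "(\<Sum>i<length xs. d i * xs ! i) = 0"
    by (subst sumsplit) (auto simp: d_def x0)
  hence "\<forall>i<length xs. d i = 0" using ind KU unfolding indep_over_def by blast
  thus False using l2 by (auto simp: d_def)
qed

lemma roots_unity:
  fixes \<zeta> :: "'a::field"
  assumes pr: "primitive_root p \<zeta>" and p1: "1 \<le> p" and x: "x ^ p = 1"
  shows "\<exists>i<p. x = \<zeta> ^ i"
proof -
  define q :: "'a poly" where "q = monom 1 p - 1"
  have pq: "\<And>y. poly q y = y ^ p - 1" by (simp add: q_def poly_monom)
  have cq: "coeff q p = 1" using p1 by (simp add: q_def)
  hence q0: "q \<noteq> 0" by auto
  have dq: "degree q \<le> p" unfolding q_def
    by (rule order.trans[OF degree_diff_le]) (auto simp: degree_monom_le)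
  let ?S = "{y. poly q y = 0}"
  have fin: "finite ?S" using poly_roots_finite[OF q0] .
  have cS: "card ?S \<le> p" using card_poly_roots_bound[OF q0] dq by simp
  have z0: "\<zeta> \<noteq> 0" using pr p1 unfolding primitive_root_def by (cases p) auto
  have inj: "inj_on (\<lambda>i. \<zeta> ^ i) {..<p}"
  proof (rule inj_onI)
    fix i j assume i: "i \<in> {..<p}" and j: "j \<in> {..<p}" and e: "\<zeta> ^ i = \<zeta> ^ j"
    show "i = j"
    proof (rule ccontr)
      assume "i \<noteq> j"
      then consider "i < j" | "j < i" by linarith
      thus False
      proof cases
        case 1
        have "\<zeta> ^ j = \<zeta> ^ i * \<zeta> ^ (j - i)" using 1 by (simp add: power_add[symmetric])
        hence "\<zeta> ^ (j - i) = 1" using e z0 by simp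
        thus False using pr 1 j unfolding primitive_root_def by auto
      next
        case 2
        have "\<zeta> ^ i = \<zeta> ^ j * \<zeta> ^ (i - j)" using 2 by (simp add: power_add[symmetric])
        hence "\<zeta> ^ (i - j) = 1" using e z0 by simp
        thus False using pr 2 i unfolding primitive_root_def by auto
      qed
    qed
  qed
  have sub: "(\<lambda>i. \<zeta> ^ i) ` {..<p} \<subseteq> ?S"
  proof
    fix y assume "y \<in> (\<lambda>i. \<zeta> ^ i) ` {..<p}"
    then obtain i where y: "y = \<zeta> ^ i" by auto
    have "y ^ p = (\<zeta> ^ p) ^ i" by (simp add: y power_mult[symmetric] mult.commute)
    thus "y \<in> ?S" using pr pq unfolding primitive_root_def by simp
  qed
  have "card ((\<lambda>i. \<zeta> ^ i) ` {..<p}) = p" using card_image[OF inj] by simp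
  moreover have "p \<le> card ?S" using card_mono[OF fin sub] calculation by simp
  ultimately have "(\<lambda>i. \<zeta> ^ i) ` {..<p} = ?S" using card_subset_eq[OF fin sub] cS by simp
  moreover have "x \<in> ?S" using x pq by simp
  ultimately show ?thesis by auto
qed

lemma pth_power_not_frakA:
  fixes K :: "'a::field set"
  assumes sf: "subfield K" and pr: "primitive_root p \<zeta>" and zK: "\<zeta> \<in> K"
    and p2: "2 \<le> p" and deg: "ext_degree_is K p" and X: "X \<in> K"
  shows "X ^ p \<notin> frakA K p"
proof
  assume "X ^ p \<in> frakA K p"
  hence g: "gen_field K {x. x ^ p = X ^ p} = UNIV" unfolding frakA_def by simp
  have sub: "{x. x ^ p = X ^ p} \<subseteq> K"
  proof
    fix x assume "x \<in> {x. x ^ p = X ^ p}"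
    hence e: "x ^ p = X ^ p" by simp
    show "x \<in> K"
    proof (cases "X = 0")
      case True thus ?thesis using e p2 sf_0[OF sf] by (simp add: power_0_left)
    next
      case False
      have "(x / X) ^ p = 1" using e False by (simp add: power_divide)
      then obtain i where "x / X = \<zeta> ^ i" using roots_unity[OF pr] p2 by fastforce
      hence "x = X * \<zeta> ^ i" using False by (simp add: field_simps)
      thus ?thesis using sf_mult[OF sf X sf_pow[OF sf zK]] by simp
    qed
  qed
  have "gen_field K {x. x ^ p = X ^ p} \<subseteq> K"
    unfolding gen_field_def using sf sub by blast
  hence "K = UNIV" using g by auto
  thus False using ext_deg_not_univ[OF deg p2] by simp
qed


lemma binom_minus1:
  fixes y :: "'a::comm_ring_1"
  shows "(y + 1) ^ p - 1 = (\<Sum>k\<in>{1..p}. of_nat (p choose k) * y ^ k)"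
proof -
  have "(y + 1) ^ p = (\<Sum>k\<le>p. of_nat (p choose k) * y ^ k)"
    by (simp add: binomial_ring)
  also have "{..p} = insert 0 {1..p}" by auto
  finally show ?thesis by simp
qed

locale vsetup = vfield v for v :: "'l::field_char_0 \<Rightarrow> 'g::linordered_ab_group_add" +
  fixes p :: nat and \<zeta> :: 'l
  assumes pp: "prime p" and vp: "val_pos v (of_nat p)" and pr: "primitive_root p \<zeta>"
begin

lemma p2: "2 \<le> p" using pp prime_ge_2_nat by blast
lemma pnz: "(of_nat p :: 'l) \<noteq> 0" using p2 by simp
lemma vp_pos: "0 < v (of_nat p)" using vp pnz unfolding val_pos_def by simp

lemma term_bound:
  assumes "1 \<le> k" "k < p" "ge g y"
  shows "ge (v (of_nat p) + nsm k g) (of_nat (p choose k) * y ^ k)"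
proof -
  have "p dvd (p choose k)" using dvd_choose_prime[of k p] assms p2 pp by simp
  then obtain m where m: "p choose k = p * m" by (elim dvdE)
  have "ge (v (of_nat p) + 0) (of_nat p * of_nat m)"
    using ge_mult[OF _ ge_of_nat[of m], of "v (of_nat p)" "of_nat p"] by (simp add: ge_def)
  from ge_mult[OF this ge_pow[OF assms(3)]]
  have "ge (v (of_nat p) + 0 + nsm k g) (of_nat p * of_nat m * y ^ k)" .
  thus ?thesis by (simp add: m)
qed

lemma z_facts:
  shows "\<zeta> \<noteq> 0" "\<zeta> - 1 \<noteq> 0" "v \<zeta> = 0" "0 < v (\<zeta> - 1)"
    "v (of_nat p) = nsm (p - 1) (v (\<zeta> - 1))"
proof -
  show z0: "\<zeta> \<noteq> 0" using pr p2 unfolding primitive_root_def by (cases p) auto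
  have "\<zeta> ^ 1 \<noteq> 1" using pr p2 unfolding primitive_root_def by auto
  thus zz: "\<zeta> - 1 \<noteq> 0" by simp
  have "nsm p (v \<zeta>) = 0" using vpow[OF z0, of p] pr v1 unfolding primitive_root_def by simp
  thus vz: "v \<zeta> = 0" using nsm_eq0[of p "v \<zeta>"] p2 by simp
  define z where "z = \<zeta> - 1"
  define c where "c = v z"
  define P where "P = v (of_nat p :: 'l)"
  have z0': "z \<noteq> 0" using zz z_def by simp
  have gz: "ge 0 z" unfolding z_def using ge_add[of 0 \<zeta> "-1"] vz vm1 by (simp add: ge_def)
  hence c0: "0 \<le> c" using z0' by (simp add: ge_def c_def)
  let ?T = "\<lambda>k. of_nat (p choose k) * z ^ k :: 'l"
  have s0: "(\<Sum>k\<in>{1..p}. ?T k) = 0"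
    using binom_minus1[of z p] pr unfolding z_def primitive_root_def by simp
  have "{1..p} = insert p {1..<p}" using p2 by auto
  hence zp: "z ^ p = - (\<Sum>k\<in>{1..<p}. ?T k)" using s0 by (simp add: eq_neg_iff_add_eq_0)
  have "ge P (z ^ p)"
    unfolding zp P_def
    by (rule ge_neg, rule ge_sum) (use term_bound[OF _ _ gz] in auto)
  hence "P \<le> nsm p c" using z0' vpow by (simp add: ge_def c_def)
  moreover have "c \<noteq> 0"
  proof
    assume "c = 0" hence "nsm p c = 0" by (induction p) auto
    thus False using calculation vp_pos P_def by simp
  qed
  ultimately show cpos: "0 < v (\<zeta> - 1)" using c0 by (simp add: c_def z_def)
  hence cpos': "0 < c" by (simp add: c_def z_def)
  have "ge (P + c) (z ^ p)"
    unfolding zp P_def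
  proof (rule ge_neg, rule ge_sum)
    fix k assume k: "k \<in> {1..<p}"
    have "ge (v (of_nat p) + nsm k c) (?T k)" using term_bound[of k c z] k by (auto simp: ge_def c_def)
    moreover have "v (of_nat p) + c \<le> v (of_nat p) + nsm k c" using nsm_ge_self[of c k] k c0 by simp
    ultimately show "ge (v (of_nat p) + c) (?T k)" by (rule ge_mono)
  qed simp
  hence up: "P + c \<le> nsm p c" using z0' vpow by (simp add: ge_def c_def)
  have pS: "nsm p c = c + nsm (p - 1) c" using p2 by (cases p) auto
  have up': "P \<le> nsm (p - 1) c" using up pS by (simp add: add.commute)
  have "\<not> P < nsm (p - 1) c"
  proof
    assume lt: "P < nsm (p - 1) c"
    define g' where "g' = min (P + nsm 2 c) (nsm p c)"
    have "{1..p} = insert 1 {2..p}" using p2 by auto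
    hence pz: "of_nat p * z = - (\<Sum>k\<in>{2..p}. ?T k)" using s0 by (simp add: eq_neg_iff_add_eq_0)
    have "ge g' (of_nat p * z)"
      unfolding pz
    proof (rule ge_neg, rule ge_sum)
      fix k assume k: "k \<in> {2..p}"
      show "ge g' (?T k)"
      proof (cases "k = p")
        case True
        have "ge (nsm p c) (z ^ p)" using ge_pow[of c z p] by (simp add: ge_def c_def)
        hence "ge g' (z ^ p)" unfolding g'_def by (rule ge_mono[OF _ min.cobounded2])
        thus ?thesis using True by simp
      next
        case False
        have "ge (P + nsm k c) (?T k)" using term_bound[of k c z] k False by (auto simp: ge_def c_def P_def)
        moreover have "P + nsm 2 c \<le> P + nsm k c" using nsm_mono_nat[OF c0, of 2 k] k by simp
        ultimately have "ge (P + nsm 2 c) (?T k)" by (rule ge_mono)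
        thus ?thesis unfolding g'_def by (rule ge_mono[OF _ min.cobounded1])
      qed
    qed simp
    hence "g' \<le> P + c" using vmult[OF pnz z0'] pnz z0' by (simp add: ge_def c_def P_def)
    moreover have "P + c < P + nsm 2 c" using cpos' by (simp add: numeral_2_eq_2)
    moreover have "P + c < nsm p c" using lt pS by (simp add: add.commute)
    ultimately show False unfolding g'_def by (simp add: min_def split: if_splits)
  qed
  thus "v (of_nat p) = nsm (p - 1) (v (\<zeta> - 1))" using up' by (simp add: P_def c_def z_def)
qed

end

context vsetup begin

lemma hensel_step:
  fixes K :: "'l set" and h :: 'l
  assumes sf: "subfield K" and hen: "henselian K v" and zK: "\<zeta> \<in> K" and hK: "h \<in> K"
    and h1: "h - 1 \<noteq> 0" and big: "nsm p (v (\<zeta> - 1)) < v (h - 1)"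
  shows "\<exists>X\<in>K. X ^ p = h"
proof -
  define z where "z = \<zeta> - 1"
  define c where "c = v z"
  define P where "P = v (of_nat p :: 'l)"
  have z0: "z \<noteq> 0" and cpos: "0 < c" and Pc: "P = nsm (p - 1) c"
    using z_facts by (auto simp: z_def c_def P_def)
  have zpK: "z ^ p \<in> K" unfolding z_def using zK sf by (intro sf_pow sf_diff sf_1) auto
  have zp0: "z ^ p \<noteq> 0" using z0 by simp
  have vzp: "v (z ^ p) = nsm p c" using vpow[OF z0] c_def by simp
  have pS: "nsm p c = c + nsm (p - 1) c" using p2 by (cases p) auto
  have gz: "ge c z" by (simp add: ge_def c_def)
  define cf where "cf = (\<lambda>k. if k = 0 then (1 - h) / z ^ p else of_nat (p choose k) * z ^ k / z ^ p)"
  define f where "f = (\<Sum>k\<le>p. monom (cf k) k)"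
  have cff: "\<And>j. coeff f j = (if j \<le> p then cf j else 0)"
  proof -
    fix j show "coeff f j = (if j \<le> p then cf j else 0)"
    proof (cases "j \<le> p")
      case True thus ?thesis unfolding f_def using coeff_sum_monom[OF True] by simp
    next
      case False thus ?thesis unfolding f_def coeff_sum by (auto intro: sum.neutral)
    qed
  qed
  have cfp: "cf p = 1" using p2 zp0 by (simp add: cf_def)
  have degf: "degree f = p"
  proof (rule antisym)
    show "degree f \<le> p" by (rule degree_le) (auto simp: cff)
    show "p \<le> degree f" by (rule le_degree) (simp add: cff cfp)
  qed
  have lc: "lead_coeff f = 1" using degf cff cfp by simp
  have divint: "\<And>x. x \<in> K \<Longrightarrow> ge (nsm p c) x \<Longrightarrow> x / z ^ p \<in> val_ring K v"
  proof -
    fix x assume xK: "x \<in> K" and g: "ge (nsm p c) x"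
    have "x / z ^ p \<in> K" using sf_div[OF sf xK zpK] .
    moreover have "val_int v (x / z ^ p)"
    proof (cases "x = 0")
      case False
      hence "nsm p c \<le> v x" using g by (simp add: ge_def)
      thus ?thesis using vdiv[OF False zp0] vzp False zp0 by (simp add: val_int_def)
    qed (simp add: val_int_def)
    ultimately show "x / z ^ p \<in> val_ring K v" by (simp add: val_ring_def)
  qed
  have w: "v (1 - h) = v (h - 1)" using vneg[of "h - 1"] by simp
  have h1': "1 - h \<noteq> 0" using h1 by simp
  have coef: "\<forall>i. coeff f i \<in> val_ring K v"
  proof
    fix i
    show "coeff f i \<in> val_ring K v"
    proof (cases "i \<le> p")
      case False thus ?thesis using sf_0[OF sf] by (simp add: cff val_ring_def val_int_def)
    next
      case True
      show ?thesis
      proof (cases "i = 0")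
        case True
        have "ge (nsm p c) (1 - h)" using big w by (simp add: ge_def c_def z_def less_imp_le)
        thus ?thesis using True divint[of "1 - h"] sf hK by (simp add: cff cf_def sf_diff sf_1)
      next
        case False
        have iK: "of_nat (p choose i) * z ^ i \<in> K"
          unfolding z_def using sf zK by (intro sf_mult sf_nat sf_pow sf_diff sf_1)
        have "ge (nsm p c) (of_nat (p choose i) * z ^ i)"
        proof (cases "i = p")
          case True thus ?thesis using ge_pow[OF gz, of p] by simp
        next
          case ip: False
          have "ge (P + nsm i c) (of_nat (p choose i) * z ^ i)"
            using term_bound[of i c z] ip False True gz by (simp add: P_def)
          moreover have "nsm p c \<le> P + nsm i c"
            using pS Pc nsm_ge_self[of c i] cpos False by (simp add: add.commute)
          ultimately show ?thesis by (rule ge_mono)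
        qed
        thus ?thesis using True False divint[OF iK] by (simp add: cff cf_def)
      qed
    qed
  qed
  have a0: "0 \<in> val_ring K v" using sf_0[OF sf] by (simp add: val_ring_def val_int_def)
  have pf0: "val_pos v (poly f 0)"
  proof -
    have "poly f 0 = (1 - h) / z ^ p" by (simp add: poly_0_coeff_0 cff cf_def)
    moreover have "0 < v ((1 - h) / z ^ p)"
      using vdiv[OF h1' zp0] w big vzp by (simp add: c_def z_def)
    ultimately show ?thesis by (simp add: val_pos_def)
  qed
  have pd0: "\<not> val_pos v (poly (pderiv f) 0)"
  proof -
    have e: "poly (pderiv f) 0 = of_nat p * z / z ^ p"
      using p2 by (simp add: poly_0_coeff_0 coeff_pderiv cff cf_def)
    have nz: "of_nat p * z \<noteq> 0" using pnz z0 by simp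
    have "v (of_nat p * z / z ^ p) = 0"
      using vdiv[OF nz zp0] vmult[OF pnz z0] vzp pS Pc by (simp add: P_def c_def add.commute)
    thus ?thesis using e nz zp0 by (simp add: val_pos_def)
  qed
  note H = hen[unfolded henselian_def, rule_format, of f 0]
  have "\<exists>b \<in> val_ring K v. poly f b = 0 \<and> val_pos v (b - 0)"
    by (rule H) (use coef lc a0 pf0 pd0 in auto)
  then obtain b where bA: "b \<in> val_ring K v" and fb: "poly f b = 0" by blast
  have bK: "b \<in> K" using bA by (simp add: val_ring_def)
  have "poly f b = (\<Sum>k\<le>p. cf k * b ^ k)" by (simp add: f_def poly_sum poly_monom)
  also have "{..p} = insert 0 {1..p}" by auto
  also have "(\<Sum>k\<in>insert 0 {1..p}. cf k * b ^ k) = (1 - h) / z ^ p + (\<Sum>k\<in>{1..p}. of_nat (p choose k) * (z * b) ^ k) / z ^ p"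
    by (simp add: cf_def sum_divide_distrib power_mult_distrib mult.assoc)
  also have "\<dots> = ((z * b + 1) ^ p - h) / z ^ p"
  proof -
    have bm: "(\<Sum>k\<in>{1..p}. of_nat (p choose k) * (z * b) ^ k) = (z * b + 1) ^ p - 1"
      by (rule binom_minus1[symmetric])
    show ?thesis unfolding bm add_divide_distrib[symmetric] by (simp add: algebra_simps)
  qed
  finally have "(z * b + 1) ^ p = h" using fb zp0 z0 by simp
  moreover have "z * b + 1 \<in> K" unfolding z_def using sf zK bK by (intro sf_add sf_mult sf_diff sf_1)
  ultimately show ?thesis by blast
qed

end

context vfield begin
lemma v_strict_nz: "x \<noteq> 0 \<Longrightarrow> ge g y \<Longrightarrow> v x < g \<Longrightarrow> x + y \<noteq> 0"
proof
  assume x: "x \<noteq> 0" and g: "ge g y" and lt: "v x < g" and s: "x + y = 0"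
  hence "y = - x" by (simp add: eq_neg_iff_add_eq_0 add.commute)
  thus False using g lt x by (auto simp: ge_def vneg)
qed
end

context vsetup begin

lemma gen_bound:
  fixes K :: "'l set" and h a :: 'l
  assumes sf: "subfield K" and hen: "henselian K v" and zK: "\<zeta> \<in> K"
    and deg: "ext_degree_is K p"
    and hb: "best K v p (\<zeta> - 1) h" and aA: "a \<in> val_ring K v"
    and ab: "best K v p (\<zeta> - 1) (a ^ p * h)"
  shows "of_nat p * (a - 1) / (h - 1) \<in> K \<and> (of_nat p * (a - 1) / (h - 1) = 0 \<or>
     nsm (p - 1) (v ((\<zeta> - 1) ^ p / (h - 1))) \<le> nsm p (v (of_nat p * (a - 1) / (h - 1))))"
proof -
  define z where "z = \<zeta> - 1"
  define c where "c = v z"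
  define P where "P = v (of_nat p :: 'l)"
  have z0: "z \<noteq> 0" and cpos: "0 < c" and Pc: "P = nsm (p - 1) c"
    using z_facts by (auto simp: z_def c_def P_def)
  have zp0: "z ^ p \<noteq> 0" using z0 by simp
  have vzp: "v (z ^ p) = nsm p c" using vpow[OF z0] c_def by simp
  have pS: "\<And>g. nsm p g = g + nsm (p - 1) g" using p2 by (cases p) auto
  have hA: "h \<in> frakA K p" and hK: "h \<in> K" using hb by (auto simp: best_def frakA_def)
  have aK: "a \<in> K" using aA by (simp add: val_ring_def)
  have one_not: "\<And>g. g \<in> frakA K p \<Longrightarrow> g - 1 \<noteq> 0"
    using pth_power_not_frakA[OF sf pr zK p2 deg sf_1[OF sf]] by auto
  have h1: "h - 1 \<noteq> 0" using one_not hA .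
  have ah1: "a ^ p * h - 1 \<noteq> 0" using one_not ab by (auto simp: best_def)
  have "v (z ^ p / (h - 1)) = v (z ^ p / (a ^ p * h - 1))"
  proof (rule order.antisym)
    have "a ^ p * h \<in> frakA K p" using ab by (simp add: best_def)
    thus "v (z ^ p / (h - 1)) \<le> v (z ^ p / (a ^ p * h - 1))" using hb unfolding best_def z_def by simp
    show "v (z ^ p / (a ^ p * h - 1)) \<le> v (z ^ p / (h - 1))" using ab hA unfolding best_def z_def by simp
  qed
  hence weq: "v (a ^ p * h - 1) = v (h - 1)"
    using vdiv[OF zp0 h1] vdiv[OF zp0 ah1] by simp
  define w where "w = v (h - 1)"
  have sK: "of_nat p * (a - 1) / (h - 1) \<in> K"
    using sf aK hK by (intro sf_div sf_mult sf_nat sf_diff sf_1)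
  show ?thesis
  proof (cases "a = 1")
    case True thus ?thesis using sK by simp
  next
    case False
    define b where "b = a - 1"
    define \<delta> where "\<delta> = v b"
    have b0: "b \<noteq> 0" using False b_def by simp
    have ga: "ge 0 a" using aA by (auto simp: val_ring_def val_int_def ge_def)
    have gb: "ge 0 b" unfolding b_def using ge_add[OF ga, of "-1"] vm1 by (simp add: ge_def)
    hence d0: "0 \<le> \<delta>" using b0 by (simp add: ge_def \<delta>_def)
    have key: "w \<le> nsm p \<delta>"
    proof (rule ccontr)
      assume "\<not> w \<le> nsm p \<delta>"
      hence lt: "nsm p \<delta> < w" by simp
      show False
      proof (cases "\<delta> < c")
        case True
        let ?T = "\<lambda>k. of_nat (p choose k) * b ^ k :: 'l"
        have "{1..p} = insert p {1..<p}" using p2 by auto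
        hence ap: "a ^ p - 1 = b ^ p + (\<Sum>k\<in>{1..<p}. ?T k)"
          using binom_minus1[of b p] by (simp add: b_def)
        define g where "g = nsm (p - 1) c + \<delta>"
        have gs: "ge g (\<Sum>k\<in>{1..<p}. ?T k)"
        proof (rule ge_sum)
          fix k assume k: "k \<in> {1..<p}"
          have "ge (P + nsm k \<delta>) (?T k)" using term_bound[of k \<delta> b] k by (auto simp: ge_def \<delta>_def P_def)
          moreover have "g \<le> P + nsm k \<delta>" using nsm_ge_self[OF d0, of k] k by (simp add: g_def Pc)
          ultimately show "ge g (?T k)" by (rule ge_mono)
        qed simp
        have bp0: "b ^ p \<noteq> 0" using b0 by simp
        have vbp: "v (b ^ p) = nsm p \<delta>" using vpow[OF b0] \<delta>_def by simp
        have "nsm (p - 1) \<delta> < nsm (p - 1) c" using nsm_strict[OF True] p2 by simp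
        hence "nsm (p - 1) \<delta> + \<delta> < g" by (simp add: g_def)
        hence vlt: "v (b ^ p) < g" using vbp pS[of \<delta>] by (simp add: add.commute)
        have vap: "v (a ^ p - 1) = nsm p \<delta>" using v_strict[OF bp0 gs vlt] ap vbp by simp
        have ap0: "a ^ p - 1 \<noteq> 0" using v_strict_nz[OF bp0 gs vlt] ap by simp
        have "ge (nsm p 0 + w) (a ^ p * (h - 1))"
          by (rule ge_mult[OF ge_pow[OF ga]]) (simp add: ge_def w_def)
        hence g2: "ge w (a ^ p * (h - 1))" by simp
        have e: "a ^ p * h - 1 = (a ^ p - 1) + a ^ p * (h - 1)" by (simp add: algebra_simps)
        have "v ((a ^ p - 1) + a ^ p * (h - 1)) = nsm p \<delta>" using v_strict[OF ap0 g2] vap lt by simp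
        hence "v (a ^ p * h - 1) = nsm p \<delta>" by (simp only: e)
        thus False using weq lt w_def by simp
      next
        case False
        hence "nsm p c \<le> nsm p \<delta>" using nsm_mono[of c \<delta> p] by simp
        hence "nsm p (v (\<zeta> - 1)) < v (h - 1)" using lt by (simp add: c_def z_def w_def)
        then obtain X where XK: "X \<in> K" and X: "X ^ p = h" using hensel_step[OF sf hen zK hK h1] by blast
        show False using pth_power_not_frakA[OF sf pr zK p2 deg XK] X hA by simp
      qed
    qed
    have pb0: "of_nat p * b \<noteq> 0" using pnz b0 by simp
    have vs: "v (of_nat p * (a - 1) / (h - 1)) = P + \<delta> - w"
      using vdiv[OF pb0 h1] vmult[OF pnz b0] by (simp add: b_def P_def \<delta>_def w_def)
    have vq: "v ((\<zeta> - 1) ^ p / (h - 1)) = nsm p c - w"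
      using vdiv[OF zp0 h1] vzp by (simp add: z_def w_def)
    have comm: "nsm p (nsm (p - 1) c) = nsm (p - 1) (nsm p c)"
    proof -
      have "nsm p (nsm (p - 1) c) = nsm (p * (p - 1)) c" by (rule nsm_mult_nat[symmetric])
      also have "p * (p - 1) = (p - 1) * p" by (rule mult.commute)
      also have "nsm ((p - 1) * p) c = nsm (p - 1) (nsm p c)" by (rule nsm_mult_nat)
      finally show ?thesis .
    qed
    have comm': "nsm p (nsm (p - Suc 0) c) = nsm (p - Suc 0) (nsm p c)" using comm by simp
    have "nsm (p - 1) (v ((\<zeta> - 1) ^ p / (h - 1))) = nsm (p - 1) (nsm p c) - nsm (p - 1) w"
      by (simp add: vq nsm_diff)
    also have "\<dots> \<le> nsm (p - 1) (nsm p c) + nsm p \<delta> - (w + nsm (p - 1) w)"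
      using key by (simp add: algebra_simps)
    also have "\<dots> = nsm p (P + \<delta> - w)"
      by (simp add: nsm_diff nsm_add Pc comm' pS[of w])
    finally show ?thesis using sK vs by simp
  qed
qed

end


lemma ideal_closed:
  fixes v :: "'l::field_char_0 \<Rightarrow> 'g::linordered_ab_group_add"
  assumes val: "valuation v" and sf: "subfield K" and p0: "0 < p"
    and S: "\<And>s. s \<in> S \<Longrightarrow> s \<in> K \<and> (s = 0 \<or> G \<le> nsm p (v s))"
  shows "ideal_gen (val_ring K v) S \<subseteq> {x \<in> K. x = 0 \<or> G \<le> nsm p (v x)}"
proof -
  interpret vfield v using val by unfold_locales
  let ?T = "{x \<in> K. x = 0 \<or> G \<le> nsm p (v x)}"
  have add: "x + y \<in> ?T" if x: "x \<in> ?T" and y: "y \<in> ?T" for x y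
  proof (cases "x = 0 \<or> y = 0 \<or> x + y = 0")
    case True thus ?thesis using x y sf_add[OF sf] by auto
  next
    case False
    hence m: "min (v x) (v y) \<le> v (x + y)" using vadd by blast
    have "G \<le> nsm p (min (v x) (v y))" using x y False by (simp add: min_def)
    also have "\<dots> \<le> nsm p (v (x + y))" using nsm_mono[OF m] .
    finally show ?thesis using x y sf_add[OF sf] by auto
  qed
  have mul: "c * x \<in> ?T" if c: "c \<in> val_ring K v" and x: "x \<in> ?T" for c x
  proof (cases "c = 0 \<or> x = 0")
    case True thus ?thesis using x c sf_0[OF sf] by auto
  next
    case False
    have c0: "0 \<le> v c" using c False by (simp add: val_ring_def val_int_def)
    have "v x \<le> v (c * x)" using vmult[of c x] False c0 by simp
    hence "G \<le> nsm p (v (c * x))" using x False nsm_mono[of "v x" "v (c * x)" p] by auto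
    thus ?thesis using x c sf_mult[OF sf] by (auto simp: val_ring_def)
  qed
  show ?thesis
  proof
    fix x assume "x \<in> ideal_gen (val_ring K v) S"
    then obtain n :: nat and c s where x: "x = (\<Sum>i<n. c i * s i)" and cs: "\<forall>i<n. c i \<in> val_ring K v \<and> s i \<in> S"
      unfolding ideal_gen_def by (simp only: mem_Collect_eq) blast
    have "(\<Sum>i<m. c i * s i) \<in> ?T" if "m \<le> n" for m
      using that
    proof (induction m)
      case 0 thus ?case using sf_0[OF sf] by simp
    next
      case (Suc m)
      have "c m * s m \<in> ?T" using mul cs S Suc.prems by auto
      thus ?case using add Suc by simp
    qed
    thus "x \<in> ?T" using x by simp
  qed
qed

theorem corollary6p7:
  fixes K :: "'l::field_char_0 set"
    and v :: "'l \<Rightarrow> 'g::linordered_ab_group_add"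
    and p :: nat and \<zeta> h :: 'l
  assumes "subfield K"
    and "valuation v"
    and "henselian K v"
    and "prime p"
    and "val_pos v (of_nat p)"
    and "\<zeta> \<in> K" and "primitive_root p \<zeta>"
    and "frakA K p \<noteq> {}"
    and "ext_degree_is K p"
    and "defectless K v p"
    and "best K v p (\<zeta> - 1) h"
  shows "ideal_gen (val_ring K v)
           {of_nat p * (a - 1) / (h - 1) | a. a \<in> val_ring K v \<and> best K v p (\<zeta> - 1) (a ^ p * h)}
         \<subseteq> {x \<in> K. x = 0 \<or>
               nsm (p - 1) (v ((\<zeta> - 1) ^ p / (h - 1))) \<le> nsm p (v x)}"
proof -
  interpret vsetup v p \<zeta>
    using assms by unfold_locales (auto simp: vfield_def)
  show ?thesis
  proof (rule ideal_closed[OF assms(2) assms(1)])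
    show "0 < p" using p2 by simp
    fix s assume "s \<in> {of_nat p * (a - 1) / (h - 1) | a. a \<in> val_ring K v \<and> best K v p (\<zeta> - 1) (a ^ p * h)}"
    then obtain a where s: "s = of_nat p * (a - 1) / (h - 1)" and a: "a \<in> val_ring K v"
      "best K v p (\<zeta> - 1) (a ^ p * h)" by blast
    show "s \<in> K \<and> (s = 0 \<or> nsm (p - 1) (v ((\<zeta> - 1) ^ p / (h - 1))) \<le> nsm p (v s))"
      unfolding s by (rule gen_bound[OF assms(1) assms(3) assms(6) assms(9) assms(11) a])
  qed
qed

end
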